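(* Let $d\geq 1$, $n\geq 1$ and $r$ be integers with $r\geq d+n$. Then a general form $F$ of degree $d$ in $n+1$ variables has an apolar star configuration $\mathbb{X}(r)\subset\mathbb{P}^n$.
   Context: Let $S=\mathbb{C}[x_0,\dots,x_n]$ and $T=\mathbb{C}[y_0,\dots,y_n]$, where $T$ acts on $S$ by differentiation, $y_j=\partial/\partial x_j$. For a form $F\in S$ of degree $d$, $F^\perp=\{\partial\in T:\partial F=0\}$. A finite set of points $\mathbb{X}\subset\mathbb{P}^n=\mathbb{P}(S_1)$ with defining ideal $I(\mathbb{X})\subseteq T$ is apolar to $F$ if $I(\mathbb{X})\subseteq F^\perp$. A star configuration $\mathbb{X}(r)\subset\mathbb{P}^n$: take $r$ linear forms $l_1,\dots,l_r\in T_1$ such that any $n+1$ of them are linearly independent; $\mathbb{X}(r)$ is the set of $\binom{r}{n}$ points obtained by intersecting the hyperplanes $\{l_i=0\}$ $n$ at a time in all possible ways, i.e. the variety defined by $\bigcap_{\{j_1,\dots,j_n\}\subseteq\{1,\dots,r\}}(l_{j_1},\dots,l_{j_n})$. "A general form" means any form in a suitable nonempty Zariski open subset of the space of degree $d$ forms. *)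

theory Defs
  imports Complex_Main "HOL-Library.Poly_Mapping"
begin

text \<open>S = C[x_0..x_n] and T = C[y_0..y_n] are both rendered as nat mpoly with variables
restricted to indices 0..n.\<close>

type_synonym 'v mpoly = "('v \<Rightarrow>\<^sub>0 nat) \<Rightarrow>\<^sub>0 complex"

definition mon_deg :: "('v \<Rightarrow>\<^sub>0 nat) \<Rightarrow> nat" where
  "mon_deg \<alpha> = (\<Sum>i\<in>Poly_Mapping.keys \<alpha>. Poly_Mapping.lookup \<alpha> i)"

definition mpeval :: "'v mpoly \<Rightarrow> ('v \<Rightarrow> complex) \<Rightarrow> complex" where
  "mpeval p x = (\<Sum>\<beta>\<in>Poly_Mapping.keys p. Poly_Mapping.lookup p \<beta> * (\<Prod>i\<in>Poly_Mapping.keys \<beta>. x i ^ Poly_Mapping.lookup \<beta> i))"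

definition in_vars :: "nat \<Rightarrow> nat mpoly \<Rightarrow> bool" where
  "in_vars n p \<longleftrightarrow> (\<forall>\<alpha>\<in>Poly_Mapping.keys p. Poly_Mapping.keys \<alpha> \<subseteq> {..n})"

definition is_form :: "nat \<Rightarrow> nat \<Rightarrow> nat mpoly \<Rightarrow> bool" where
  "is_form n d F \<longleftrightarrow> in_vars n F \<and> (\<forall>\<alpha>\<in>Poly_Mapping.keys F. mon_deg \<alpha> = d)"

text \<open>Coefficient of x^gamma in D F, where y_j acts as d/dx_j:
  y^beta applied to x^(beta+gamma) gives ((beta+gamma)!/gamma!) x^gamma.\<close>
definition diff_act :: "nat mpoly \<Rightarrow> nat mpoly \<Rightarrow> (nat \<Rightarrow>\<^sub>0 nat) \<Rightarrow> complex" where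
  "diff_act D F \<gamma> = (\<Sum>\<beta>\<in>Poly_Mapping.keys D. Poly_Mapping.lookup D \<beta> * Poly_Mapping.lookup F (\<beta> + \<gamma>) *
       (\<Prod>i\<in>Poly_Mapping.keys \<beta>. of_nat (fact (Poly_Mapping.lookup (\<beta> + \<gamma>) i)) / of_nat (fact (Poly_Mapping.lookup \<gamma> i))))"

definition perp :: "nat \<Rightarrow> nat mpoly \<Rightarrow> nat mpoly set" where
  "perp n F = {D. in_vars n D \<and> (\<forall>\<gamma>. diff_act D F \<gamma> = 0)}"

text \<open>Ideal in T of a set of points, the points being given by (all nonzero)
representative vectors in C^(n+1) (coordinates 0..n).\<close>
definition ideal_of :: "nat \<Rightarrow> (nat \<Rightarrow> complex) set \<Rightarrow> nat mpoly set" where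
  "ideal_of n X = {g. in_vars n g \<and> (\<forall>v\<in>X. mpeval g v = 0)}"

definition apolar :: "nat \<Rightarrow> nat mpoly \<Rightarrow> (nat \<Rightarrow> complex) set \<Rightarrow> bool" where
  "apolar n F X \<longleftrightarrow> ideal_of n X \<subseteq> perp n F"

text \<open>Linear forms l_1..l_r in T_1: l j i is the coefficient of y_i in l_j.
Any n+1 of them are linearly independent.\<close>
definition star_admissible :: "nat \<Rightarrow> nat \<Rightarrow> (nat \<Rightarrow> nat \<Rightarrow> complex) \<Rightarrow> bool" where
  "star_admissible n r l \<longleftrightarrow>
     (\<forall>J. J \<subseteq> {1..r} \<and> card J = n + 1 \<longrightarrow>
        (\<forall>c. (\<forall>i\<le>n. (\<Sum>j\<in>J. c j * l j i) = 0) \<longrightarrow> (\<forall>j\<in>J. c j = 0)))"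

text \<open>The star configuration X(r): all (nonzero representatives of) points of P^n
lying on n of the hyperplanes l_j = 0, i.e. the zero set of the intersection of
the ideals (l_j1,...,l_jn).\<close>
definition star_config :: "nat \<Rightarrow> nat \<Rightarrow> (nat \<Rightarrow> nat \<Rightarrow> complex) \<Rightarrow> (nat \<Rightarrow> complex) set" where
  "star_config n r l = {v. (\<exists>i\<le>n. v i \<noteq> 0) \<and>
     (\<exists>J. J \<subseteq> {1..r} \<and> card J = n \<and> (\<forall>j\<in>J. (\<Sum>i\<le>n. l j i * v i) = 0))}"

text \<open>A property holds for a general form of degree d in n+1 variables: it holds on a
nonempty Zariski open subset of the coefficient space, i.e. (equivalently, since
basic open sets form a basis) off the zero set of a nonzero polynomial h in the
coefficients (indexed by the degree d monomials in x_0..x_n).\<close>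
definition holds_generally :: "nat \<Rightarrow> nat \<Rightarrow> (nat mpoly \<Rightarrow> bool) \<Rightarrow> bool" where
  "holds_generally n d P \<longleftrightarrow>
     (\<exists>h :: (nat \<Rightarrow>\<^sub>0 nat) mpoly. h \<noteq> 0 \<and>
        (\<forall>\<beta>\<in>Poly_Mapping.keys h. \<forall>\<alpha>\<in>Poly_Mapping.keys \<beta>. Poly_Mapping.keys \<alpha> \<subseteq> {..n} \<and> mon_deg \<alpha> = d) \<and>
        (\<forall>F. is_form n d F \<and> mpeval h (Poly_Mapping.lookup F) \<noteq> 0 \<longrightarrow> P F))"

end

theory Submission imports Defs "HOL-Library.Multiset" "HOL-Computational_Algebra.Polynomial" "Jordan_Normal_Form.Determinant" begin

definition mono :: "(nat \<Rightarrow>\<^sub>0 nat) \<Rightarrow> (nat \<Rightarrow> complex) \<Rightarrow> complex" where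
  "mono \<beta> v = (\<Prod>i\<in>Poly_Mapping.keys \<beta>. v i ^ Poly_Mapping.lookup \<beta> i)"

definition Mk :: "nat \<Rightarrow> nat \<Rightarrow> (nat \<Rightarrow>\<^sub>0 nat) set" where
  "Mk n k = {\<alpha>. Poly_Mapping.keys \<alpha> \<subseteq> {..n} \<and> mon_deg \<alpha> = k}"

lemma mon_deg_sup: "finite S \<Longrightarrow> Poly_Mapping.keys \<alpha> \<subseteq> S \<Longrightarrow> mon_deg \<alpha> = (\<Sum>i\<in>S. Poly_Mapping.lookup \<alpha> i)"
  unfolding mon_deg_def by (rule sum.mono_neutral_left) (auto simp: in_keys_iff)

lemma mono_sup: "finite S \<Longrightarrow> Poly_Mapping.keys \<alpha> \<subseteq> S \<Longrightarrow> mono \<alpha> v = (\<Prod>i\<in>S. v i ^ Poly_Mapping.lookup \<alpha> i)"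
  unfolding mono_def by (rule prod.mono_neutral_left) (auto simp: in_keys_iff)

lemma mon_deg_add: "mon_deg (a + b) = mon_deg a + mon_deg b"
proof -
  let ?S = "Poly_Mapping.keys a \<union> Poly_Mapping.keys b"
  have "mon_deg (a+b) = (\<Sum>i\<in>?S. Poly_Mapping.lookup (a+b) i)"
    using keys_add[of a b] by (intro mon_deg_sup) auto
  also have "\<dots> = (\<Sum>i\<in>?S. Poly_Mapping.lookup a i) + (\<Sum>i\<in>?S. Poly_Mapping.lookup b i)"
    by (simp add: lookup_add sum.distrib)
  also have "\<dots> = mon_deg a + mon_deg b"
    by (subst (1 2) mon_deg_sup[of ?S]) auto
  finally show ?thesis .
qed

lemma mono_add: "mono (a + b) v = mono a v * mono b v"
proof -
  let ?S = "Poly_Mapping.keys a \<union> Poly_Mapping.keys b"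
  have "mono (a+b) v = (\<Prod>i\<in>?S. v i ^ Poly_Mapping.lookup (a+b) i)"
    using keys_add[of a b] by (intro mono_sup) auto
  also have "\<dots> = (\<Prod>i\<in>?S. v i ^ Poly_Mapping.lookup a i) * (\<Prod>i\<in>?S. v i ^ Poly_Mapping.lookup b i)"
    by (simp add: lookup_add power_add prod.distrib)
  also have "\<dots> = mono a v * mono b v"
    by (subst (1 2) mono_sup[of ?S]) auto
  finally show ?thesis .
qed

lemma mon_deg_single: "mon_deg (Poly_Mapping.single i 1) = 1"
  unfolding mon_deg_def by simp

lemma mono_single: "mono (Poly_Mapping.single i 1) v = v i"
  unfolding mono_def by simp

lemma mono_zero: "mono 0 v = 1" unfolding mono_def by simp

lemma mon_deg_zero_iff: "mon_deg \<alpha> = 0 \<longleftrightarrow> \<alpha> = 0"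
  unfolding mon_deg_def by (auto simp: in_keys_iff intro: poly_mapping_eqI)

lemma Mk0: "Mk n 0 = {0}"
  unfolding Mk_def using mon_deg_zero_iff by auto

lemma mono_scale: "mono \<gamma> (\<lambda>i. c * v i) = c ^ mon_deg \<gamma> * mono \<gamma> v"
  unfolding mono_def mon_deg_def by (simp add: power_mult_distrib prod.distrib power_sum)

definition pm_of :: "nat multiset \<Rightarrow> (nat \<Rightarrow>\<^sub>0 nat)" where
  "pm_of m = Abs_poly_mapping (count m)"

lemma lookup_pm_of: "Poly_Mapping.lookup (pm_of m) = count m"
  unfolding pm_of_def by (rule lookup_Abs_poly_mapping) simp

lemma keys_pm_of: "Poly_Mapping.keys (pm_of m) = set_mset m"
  by (auto simp: in_keys_iff lookup_pm_of)

lemma Mk_image: "Mk n k = pm_of ` multisets_of_size {..n} k"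
proof (rule subset_antisym; rule subsetI)
  fix \<alpha> assume a: "\<alpha> \<in> Mk n k"
  define m where "m = Abs_multiset (Poly_Mapping.lookup \<alpha>)"
  have fin: "finite {x. 0 < Poly_Mapping.lookup \<alpha> x}"
    using finite_keys[of \<alpha>] by (simp add: in_keys_iff[symmetric] keys_def[symmetric]) 
  then have cm: "count m = Poly_Mapping.lookup \<alpha>" unfolding m_def by (rule count_Abs_multiset)
  have "\<alpha> = pm_of m" by (rule poly_mapping_eqI) (simp add: lookup_pm_of cm)
  moreover have "set_mset m = Poly_Mapping.keys \<alpha>" by (auto simp: set_mset_def cm in_keys_iff)
  moreover have "size m = mon_deg \<alpha>"
    by (simp add: size_multiset_overloaded_eq mon_deg_def cm \<open>set_mset m = _\<close>)
  ultimately show "\<alpha> \<in> pm_of ` multisets_of_size {..n} k"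
    using a unfolding Mk_def multisets_of_size_def by auto
next
  fix \<alpha> assume "\<alpha> \<in> pm_of ` multisets_of_size {..n} k"
  then obtain m where "\<alpha> = pm_of m" "set_mset m \<subseteq> {..n}" "size m = k"
    unfolding multisets_of_size_def by auto
  then show "\<alpha> \<in> Mk n k"
    unfolding Mk_def by (simp add: keys_pm_of mon_deg_def lookup_pm_of size_multiset_overloaded_eq)
qed

lemma inj_pm_of: "inj pm_of"
  by (rule injI) (metis lookup_pm_of multiset_eqI)

lemma finite_Mk: "finite (Mk n k)"
  unfolding Mk_image by auto

lemma card_Mk: "card (Mk n k) = (k + n) choose n"
proof -
  have "card (Mk n k) = card (multisets_of_size {..n} k)"
    unfolding Mk_image by (rule card_image) (meson inj_pm_of inj_on_subset subset_UNIV)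
  also have "\<dots> = (n + k) choose k" by (simp add: card_multisets_of_size)
  also have "\<dots> = (k + n) choose n" by (metis add.commute binomial_symmetric le_add2 add_diff_cancel_right')
  finally show ?thesis .
qed


lemma lin_prod_expand:
  fixes a :: "nat \<Rightarrow> nat \<Rightarrow> complex"
  assumes "finite A"
  shows "\<exists>coef. \<forall>v. (\<Prod>j\<in>A. \<Sum>i\<le>n. a j i * v i) = (\<Sum>\<beta>\<in>Mk n (card A). coef \<beta> * mono \<beta> v)"
  using assms
proof (induction A rule: finite_induct)
  case empty
  show ?case by (rule exI[of _ "\<lambda>_. 1"]) (simp add: Mk0 mono_zero)
next
  case (insert x A)
  from insert.IH obtain cf where cf: "\<And>v. (\<Prod>j\<in>A. \<Sum>i\<le>n. a j i * v i) = (\<Sum>\<beta>\<in>Mk n (card A). cf \<beta> * mono \<beta> v)"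
    by blast
  define S where "S = {..n} \<times> Mk n (card A)"
  define g where "g = (\<lambda>p::nat \<times> (nat \<Rightarrow>\<^sub>0 nat). snd p + Poly_Mapping.single (fst p) 1)"
  define coef where "coef = (\<lambda>\<gamma>. \<Sum>p\<in>{p\<in>S. g p = \<gamma>}. a x (fst p) * cf (snd p))"
  have finS: "finite S" unfolding S_def using finite_Mk by auto
  have gS: "g ` S \<subseteq> Mk n (Suc (card A))"
  proof (rule image_subsetI)
    fix p assume "p \<in> S"
    then obtain i \<beta> where p: "p = (i, \<beta>)" "i \<le> n" "\<beta> \<in> Mk n (card A)" unfolding S_def by auto
    have "Poly_Mapping.keys (\<beta> + Poly_Mapping.single i (1::nat)) \<subseteq> {..n}"
      using keys_add[of \<beta> "Poly_Mapping.single i (1::nat)"] p unfolding Mk_def by auto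
    then show "g p \<in> Mk n (Suc (card A))"
      using p mon_deg_single[of i] unfolding g_def Mk_def by (simp add: mon_deg_add)
  qed
  show ?case
  proof (rule exI[of _ coef], rule allI)
    fix v
    have "(\<Prod>j\<in>insert x A. \<Sum>i\<le>n. a j i * v i) = (\<Sum>i\<le>n. a x i * v i) * (\<Sum>\<beta>\<in>Mk n (card A). cf \<beta> * mono \<beta> v)"
      using insert by (simp add: cf)
    also have "\<dots> = (\<Sum>p\<in>S. a x (fst p) * cf (snd p) * mono (g p) v)"
      unfolding S_def g_def sum_product sum.cartesian_product
      by (rule sum.cong) (auto simp: mono_add mono_single mono_single[simplified])
    also have "\<dots> = (\<Sum>\<gamma>\<in>Mk n (Suc (card A)). \<Sum>p\<in>{p\<in>S. g p = \<gamma>}. a x (fst p) * cf (snd p) * mono (g p) v)"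
      by (rule sum.group[symmetric]) (use finS finite_Mk gS in auto)
    also have "\<dots> = (\<Sum>\<gamma>\<in>Mk n (Suc (card A)). coef \<gamma> * mono \<gamma> v)"
      unfolding coef_def sum_distrib_right by (rule sum.cong) auto
    finally show "(\<Prod>j\<in>insert x A. \<Sum>i\<le>n. a j i * v i) = (\<Sum>\<beta>\<in>Mk n (card (insert x A)). coef \<beta> * mono \<beta> v)"
      using insert by simp
  qed
qed


definition qJ :: "nat set \<Rightarrow> complex poly" where
  "qJ J = (\<Prod>j\<in>J. [:- of_nat j, 1:])"

definition pt :: "nat set \<Rightarrow> nat \<Rightarrow> complex" where
  "pt J i = coeff (qJ J) i"

definition lv :: "nat \<Rightarrow> nat \<Rightarrow> complex" where
  "lv j i = of_nat j ^ i"

lemma degree_qJ: "finite J \<Longrightarrow> degree (qJ J) = card J"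
  unfolding qJ_def by (subst degree_prod_eq_sum_degree) auto

lemma lead_qJ: "coeff (qJ J) (card J) = 1" if "finite J"
  using lead_coeff_prod[of "\<lambda>j. [:- of_nat j, 1::complex:]" J] degree_qJ[OF that]
  unfolding qJ_def by simp

lemma poly_qJ: "poly (qJ J) x = (\<Prod>i\<in>J. x - of_nat i)"
  unfolding qJ_def by (simp add: poly_prod)

lemma poly_qJ_nz: "finite J \<Longrightarrow> j \<notin> J \<Longrightarrow> poly (qJ J) (of_nat j) \<noteq> 0"
  unfolding poly_qJ by (auto simp: prod_zero_iff)

lemma eval_lv: assumes "degree q \<le> n" shows "(\<Sum>i\<le>n. lv j i * coeff q i) = poly q (of_nat j)"
proof -
  have "(\<Sum>i\<le>n. lv j i * coeff q i) = (\<Sum>i\<le>n. coeff q i * of_nat j ^ i)" by (simp add: lv_def mult.commute)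
  also have "\<dots> = (\<Sum>i\<le>degree q. coeff q i * of_nat j ^ i)"
    by (rule sum.mono_neutral_right) (use assms in \<open>auto simp: coeff_eq_0\<close>)
  also have "\<dots> = poly q (of_nat j)" by (simp add: poly_altdef)
  finally show ?thesis .
qed

lemma admissible: "star_admissible n r lv"
  unfolding star_admissible_def
proof (intro allI impI ballI)
  fix J c j0
  assume J: "J \<subseteq> {1..r} \<and> card J = n + 1" and eq: "\<forall>i\<le>n. (\<Sum>j\<in>J. c j * lv j i) = 0" and j0: "j0 \<in> J"
  have fJ: "finite J" using J finite_subset by blast
  define q where "q = qJ (J - {j0})"
  have dq: "degree q = n" unfolding q_def using fJ J j0 by (simp add: degree_qJ)
  have "0 = (\<Sum>i\<le>n. coeff q i * (\<Sum>j\<in>J. c j * lv j i))" using eq by simp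
  also have "\<dots> = (\<Sum>j\<in>J. c j * (\<Sum>i\<le>n. lv j i * coeff q i))"
    by (simp add: sum_distrib_left sum_distrib_right mult_ac sum.swap[of _ "{..n}"])
  also have "\<dots> = (\<Sum>j\<in>J. c j * poly q (of_nat j))" using dq by (simp add: eval_lv)
  also have "\<dots> = c j0 * poly q (of_nat j0)"
    by (rule sum.remove[OF fJ j0, THEN trans]) (auto simp: q_def poly_qJ fJ intro!: sum.neutral)
  finally have "c j0 * poly q (of_nat j0) = 0" by simp
  moreover have "poly q (of_nat j0) \<noteq> 0" unfolding q_def using fJ by (intro poly_qJ_nz) auto
  ultimately show "c j0 = 0" by simp
qed

lemma pt_in_star: assumes "J \<subseteq> {1..r}" "card J = n" "c \<noteq> 0"
  shows "(\<lambda>i. c * pt J i) \<in> star_config n r lv"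
proof -
  have fJ: "finite J" using assms finite_subset by blast
  have "c * pt J n \<noteq> 0" using assms lead_qJ[OF fJ] by (simp add: pt_def)
  moreover have "\<forall>j\<in>J. (\<Sum>i\<le>n. lv j i * (c * pt J i)) = 0"
  proof
    fix j assume "j \<in> J"
    have "(\<Sum>i\<le>n. lv j i * (c * pt J i)) = c * (\<Sum>i\<le>n. lv j i * coeff (qJ J) i)"
      by (simp add: pt_def sum_distrib_left mult_ac)
    also have "\<dots> = c * poly (qJ J) (of_nat j)" using degree_qJ[OF fJ] assms by (simp add: eval_lv)
    also have "\<dots> = 0" using \<open>j \<in> J\<close> fJ by (simp add: poly_qJ prod_zero_iff)
    finally show "(\<Sum>i\<le>n. lv j i * (c * pt J i)) = 0" .
  qed
  ultimately show ?thesis unfolding star_config_def using assms by blast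
qed


lemma eval_pt: assumes "finite J" "card J = n"
  shows "(\<Sum>i\<le>n. lv j i * pt J i) = poly (qJ J) (of_nat j)"
  unfolding pt_def using assms by (intro eval_lv) (simp add: degree_qJ)

lemma core:
  fixes c :: "(nat \<Rightarrow>\<^sub>0 nat) \<Rightarrow> complex"
  assumes vanish: "\<And>J. J \<subseteq> {1..k+n} \<Longrightarrow> card J = n \<Longrightarrow> (\<Sum>\<beta>\<in>Mk n k. c \<beta> * mono \<beta> (pt J)) = 0"
  shows "\<forall>\<beta>\<in>Mk n k. c \<beta> = 0"
proof -
  define A where "A = {1..k+n}"
  define Js where "Js = {J. J \<subseteq> A \<and> card J = n}"
  define N where "N = card (Mk n k)"
  have finA: "finite A" unfolding A_def by simp
  have finJs: "finite Js" unfolding Js_def using finA by auto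
  have cardJs: "card Js = N" unfolding Js_def N_def card_Mk using n_subsets[OF finA] by (simp add: A_def)
  obtain eM where eM: "bij_betw eM {0..<N} (Mk n k)"
    using ex_bij_betw_nat_finite[OF finite_Mk] unfolding N_def by blast
  obtain eJ where eJ: "bij_betw eJ {0..<N} Js"
    using ex_bij_betw_nat_finite[OF finJs] unfolding cardJs by blast
  define f where "f = (\<lambda>J v. \<Prod>j\<in>A - J. \<Sum>i\<le>n. lv j i * v i)"
  have "\<forall>J\<in>Js. \<exists>coef. \<forall>v. f J v = (\<Sum>\<beta>\<in>Mk n k. coef \<beta> * mono \<beta> v)"
  proof
    fix J assume J: "J \<in> Js"
    have JA: "J \<subseteq> A" "card J = n" using J unfolding Js_def by auto
    have "finite J" using JA finA finite_subset by blast
    then have "card (A - J) = k" using JA card_Diff_subset[of J A] unfolding A_def by simp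
    then show "\<exists>coef. \<forall>v. f J v = (\<Sum>\<beta>\<in>Mk n k. coef \<beta> * mono \<beta> v)"
      unfolding f_def using lin_prod_expand[of "A - J" lv n] finA by auto
  qed
  then obtain cf where cf: "\<And>J v. J \<in> Js \<Longrightarrow> f J v = (\<Sum>\<beta>\<in>Mk n k. cf J \<beta> * mono \<beta> v)"
    by metis
  have finJ: "J \<in> Js \<Longrightarrow> finite J" for J unfolding Js_def using finA finite_subset by auto
  have fpt: "f J (pt J') = (\<Prod>j\<in>A - J. poly (qJ J') (of_nat j))" if "J' \<in> Js" for J J'
    unfolding f_def using that finJ[OF that] by (simp add: eval_pt Js_def)
  have off: "f J (pt J') = 0" if "J \<in> Js" "J' \<in> Js" "J \<noteq> J'" for J J'
  proof -
    have "\<not> J' \<subseteq> J"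
      using that finJ card_subset_eq unfolding Js_def by (metis (mono_tags, lifting) mem_Collect_eq)
    then obtain j where j: "j \<in> J'" "j \<notin> J" by blast
    then have "j \<in> A - J" using that unfolding Js_def by auto
    moreover have "poly (qJ J') (of_nat j) = 0" using j finJ[OF that(2)] by (simp add: poly_qJ prod_zero_iff)
    ultimately show ?thesis unfolding fpt[OF that(2)] using finA by (auto simp: prod_zero_iff)
  qed
  have diag: "f J (pt J) \<noteq> 0" if "J \<in> Js" for J
    unfolding fpt[OF that] using finA finJ[OF that] poly_qJ_nz by (auto simp: prod_zero_iff)
  define E where "E = mat N N (\<lambda>(a,b). mono (eM b) (pt (eJ a)))"
  define Cm where "Cm = mat N N (\<lambda>(b,a). cf (eJ a) (eM b))"
  have E: "E \<in> carrier_mat N N" and Cm: "Cm \<in> carrier_mat N N" unfolding E_def Cm_def by auto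
  have eJin: "a < N \<Longrightarrow> eJ a \<in> Js" for a using eJ bij_betwE by fastforce
  have prodEC: "(E * Cm) $$ (a, a') = f (eJ a') (pt (eJ a))" if "a < N" "a' < N" for a a'
  proof -
    have "(E * Cm) $$ (a, a') = (\<Sum>b\<in>{0..<N}. mono (eM b) (pt (eJ a)) * cf (eJ a') (eM b))"
      using that E Cm by (simp add: scalar_prod_def E_def Cm_def)
    also have "\<dots> = (\<Sum>\<beta>\<in>Mk n k. cf (eJ a') \<beta> * mono \<beta> (pt (eJ a)))"
      using sum.reindex_bij_betw[OF eM, of "\<lambda>\<beta>. cf (eJ a') \<beta> * mono \<beta> (pt (eJ a))"]
      by (simp add: mult.commute)
    also have "\<dots> = f (eJ a') (pt (eJ a))" using cf[OF eJin[OF that(2)]] by simp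
    finally show ?thesis .
  qed
  have ECc: "E * Cm \<in> carrier_mat N N" using E Cm by auto
  have ut: "upper_triangular (E * Cm)"
    unfolding upper_triangular_def
  proof (intro allI impI)
    fix i j assume "i < dim_row (E * Cm)" "j < i"
    then have ij: "i < N" "j < N" "i \<noteq> j" using ECc by auto
    then have "eJ i \<noteq> eJ j" using eJ unfolding bij_betw_def inj_on_def by auto
    then show "(E * Cm) $$ (i, j) = 0" using ij prodEC off eJin by auto
  qed
  have "det (E * Cm) = prod_list (diag_mat (E * Cm))" by (rule det_upper_triangular[OF ut ECc])
  also have "\<dots> \<noteq> 0"
    unfolding prod_list_zero_iff diag_mat_def using ECc prodEC diag eJin by auto
  finally have "det E * det Cm \<noteq> 0" using det_mult[OF E Cm] by simp
  then have dE: "det E \<noteq> 0" by auto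
  define x where "x = vec N (\<lambda>b. c (eM b))"
  have x: "x \<in> carrier_vec N" unfolding x_def by simp
  have "E *\<^sub>v x = 0\<^sub>v N"
  proof (rule eq_vecI)
    fix a assume a: "a < dim_vec (0\<^sub>v N :: complex vec)"
    then have aN: "a < N" by simp
    have "(E *\<^sub>v x) $ a = (\<Sum>b\<in>{0..<N}. mono (eM b) (pt (eJ a)) * c (eM b))"
      using aN E by (simp add: scalar_prod_def E_def x_def)
    also have "\<dots> = (\<Sum>\<beta>\<in>Mk n k. c \<beta> * mono \<beta> (pt (eJ a)))"
      using sum.reindex_bij_betw[OF eM, of "\<lambda>\<beta>. c \<beta> * mono \<beta> (pt (eJ a))"]
      by (simp add: mult.commute)
    also have "\<dots> = 0" using vanish eJin[OF aN] unfolding Js_def A_def by auto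
    finally show "(E *\<^sub>v x) $ a = 0\<^sub>v N $ a" using aN by simp
  qed (use E in simp)
  then have "x = 0\<^sub>v N" using det_0_iff_vec_prod_zero[OF E] dE x by blast
  then have "\<forall>b<N. c (eM b) = 0" unfolding x_def by (metis index_vec index_zero_vec(1))
  then show ?thesis using eM unfolding bij_betw_def by (metis atLeastLessThan_iff imageE)
qed


lemma mpeval_scale: "mpeval D (\<lambda>i. c * v i) = (\<Sum>\<gamma>\<in>Poly_Mapping.keys D. Poly_Mapping.lookup D \<gamma> * (c ^ mon_deg \<gamma> * mono \<gamma> v))"
  unfolding mpeval_def mono_def[symmetric] mono_scale ..

lemma key:
  assumes D: "D \<in> ideal_of n (star_config n r lv)" and kr: "k + n \<le> r"
  shows "\<forall>\<beta>\<in>Mk n k. Poly_Mapping.lookup D \<beta> = 0"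
proof (rule core)
  fix J assume J: "J \<subseteq> {1..k+n}" "card J = n"
  have Jr: "J \<subseteq> {1..r}" using J kr by auto
  have iv: "in_vars n D" and van: "\<And>v. v \<in> star_config n r lv \<Longrightarrow> mpeval D v = 0"
    using D unfolding ideal_of_def by auto
  define Q where "Q = (\<Sum>\<gamma>\<in>Poly_Mapping.keys D. monom (Poly_Mapping.lookup D \<gamma> * mono \<gamma> (pt J)) (mon_deg \<gamma>))"
  have pQ: "poly Q c = mpeval D (\<lambda>i. c * pt J i)" for c
    unfolding Q_def mpeval_scale by (simp add: poly_sum poly_monom mult_ac)
  have "Q = 0"
  proof (rule ccontr)
    assume "Q \<noteq> 0"
    then have "finite {x. poly Q x = 0}" by (rule poly_roots_finite)
    moreover have "UNIV - {0} \<subseteq> {x. poly Q x = 0}"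
      using pQ van pt_in_star[OF Jr J(2)] by auto
    ultimately have "finite (UNIV - {0::complex})" by (rule finite_subset[rotated])
    then show False by (simp add: infinite_UNIV_char_0)
  qed
  then have "0 = coeff Q k" by simp
  also have "\<dots> = (\<Sum>\<gamma>\<in>Poly_Mapping.keys D. if mon_deg \<gamma> = k then Poly_Mapping.lookup D \<gamma> * mono \<gamma> (pt J) else 0)"
    unfolding Q_def coeff_sum coeff_monom by (rule sum.cong) auto
  also have "\<dots> = (\<Sum>\<gamma>\<in>{\<gamma>\<in>Poly_Mapping.keys D. mon_deg \<gamma> = k}. Poly_Mapping.lookup D \<gamma> * mono \<gamma> (pt J))"
    by (simp add: sum.inter_filter)
  also have "\<dots> = (\<Sum>\<beta>\<in>Mk n k. Poly_Mapping.lookup D \<beta> * mono \<beta> (pt J))"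
    by (rule sum.mono_neutral_right[symmetric])
      (use iv finite_Mk in \<open>auto simp: in_vars_def Mk_def in_keys_iff\<close>)
  finally show "(\<Sum>\<beta>\<in>Mk n k. Poly_Mapping.lookup D \<beta> * mono \<beta> (pt J)) = 0" by simp
qed

theorem lemma3p1:
  fixes d n r :: nat
  assumes "d \<ge> 1" and "n \<ge> 1" and "r \<ge> d + n"
  shows "holds_generally n d
           (\<lambda>F. \<exists>l. star_admissible n r l \<and> apolar n F (star_config n r l))"
  unfolding holds_generally_def
proof (rule exI[of _ "Poly_Mapping.single 0 1"], intro conjI allI impI)
  show "Poly_Mapping.single 0 1 \<noteq> (0 :: (nat \<Rightarrow>\<^sub>0 nat) mpoly)" by simp
  show "\<forall>\<beta>\<in>Poly_Mapping.keys (Poly_Mapping.single 0 1 :: (nat \<Rightarrow>\<^sub>0 nat) mpoly).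
          \<forall>\<alpha>\<in>Poly_Mapping.keys \<beta>. Poly_Mapping.keys \<alpha> \<subseteq> {..n} \<and> mon_deg \<alpha> = d" by simp
  fix F assume "is_form n d F \<and> mpeval (Poly_Mapping.single 0 1) (Poly_Mapping.lookup F) \<noteq> 0"
  then have F: "is_form n d F" by simp
  show "\<exists>l. star_admissible n r l \<and> apolar n F (star_config n r l)"
  proof -
    have "apolar n F (star_config n r lv)"
      unfolding apolar_def
    proof
      fix D assume D: "D \<in> ideal_of n (star_config n r lv)"
      have iv: "in_vars n D" using D unfolding ideal_of_def by auto
      have "diff_act D F \<gamma> = 0" for \<gamma>
        unfolding diff_act_def
      proof (rule sum.neutral, rule ballI)
        fix \<beta> assume \<beta>: "\<beta> \<in> Poly_Mapping.keys D"
        show "Poly_Mapping.lookup D \<beta> * Poly_Mapping.lookup F (\<beta> + \<gamma>) *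
          (\<Prod>i\<in>Poly_Mapping.keys \<beta>. of_nat (fact (Poly_Mapping.lookup (\<beta> + \<gamma>) i)) / of_nat (fact (Poly_Mapping.lookup \<gamma> i))) = 0"
        proof (cases "Poly_Mapping.lookup F (\<beta> + \<gamma>) = 0")
          case False
          then have "\<beta> + \<gamma> \<in> Poly_Mapping.keys F" by (simp add: in_keys_iff)
          then have "mon_deg (\<beta> + \<gamma>) = d" using F unfolding is_form_def by auto
          then have md: "mon_deg \<beta> + n \<le> r" using assms mon_deg_add[of \<beta> \<gamma>] by simp
          have "\<beta> \<in> Mk n (mon_deg \<beta>)" using iv \<beta> unfolding in_vars_def Mk_def by auto
          then have "Poly_Mapping.lookup D \<beta> = 0" using key[OF D md] by blast
          then show ?thesis by simp
        qed simp
      qed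
      then show "D \<in> perp n F" unfolding perp_def using iv by auto
    qed
    then show ?thesis using admissible by blast
  qed
qed

end
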